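(* Let $\mathcal{S}=D_S\cup A\cup B$ with $D_S=\{0_20_2\rhd'\to 0_3\rhd',\ 1_20_2\rhd'\to\rhd',\ 1_2\rhd'\to2_3\rhd'\}$, and let $\mathcal{S}_1=\mathcal{S}\setminus\{0_20_2\rhd'\to0_3\rhd'\}$ and $\mathcal{S}_2=\mathcal{S}\setminus\{1_20_2\rhd'\to\rhd'\}$. Then (1) $\mathcal{S}_1$ is terminating if and only if every nonconvergent $S$-trajectory contains some $n\equiv1\pmod 8$; (2) $\mathcal{S}_2$ is terminating if and only if every nonconvergent $S$-trajectory contains some $n\equiv5\pmod8$.
   Context: $\mathbb{N}_{\mathrm{odd}}=\{1,3,5,\dots\}$ and $S:\mathbb{N}_{\mathrm{odd}}\to\mathbb{N}_{\mathrm{odd}}$ is $S(n)=(3n+1)/4$ if $n\equiv1\pmod8$, $S(n)=(n-1)/4$ if $n\equiv5\pmod 8$, $S(n)=(3n+1)/2$ if $n\equiv3\pmod4$. The $S$-trajectory of $n$ is $(n,S(n),S^2(n),\dots)$; it is nonconvergent if it does not contain $1$. An SRS induces $u\ell v\to urv$; terminating means no infinite rewrite sequence. Alphabet $\{0_2,1_2,0_3,1_3,2_3,\lhd,\rhd'\}$ (intended reading $\rhd'(x)=2x+1$); $A=\{0_20_3\to0_30_2,\ 0_21_3\to0_31_2,\ 0_22_3\to1_30_2,\ 1_20_3\to1_31_2,\ 1_21_3\to2_30_2,\ 1_22_3\to2_31_2\}$; $B=\{\lhd0_3\to\lhd1_2,\ \lhd1_3\to\lhd0_20_2,\ \lhd2_3\to\lhd0_21_2\}$.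 *)

theory Defs
  imports Main
begin

definition S :: "nat \<Rightarrow> nat" where
  "S n = (if n mod 8 = 1 then (3 * n + 1) div 4
          else if n mod 8 = 5 then (n - 1) div 4
          else (3 * n + 1) div 2)"

definition traj_contains :: "nat \<Rightarrow> nat \<Rightarrow> bool" where
  "traj_contains n m \<longleftrightarrow> (\<exists>k. (S ^^ k) n = m)"

definition nonconvergent :: "nat \<Rightarrow> bool" where
  "nonconvergent n \<longleftrightarrow> \<not> traj_contains n 1"

datatype sym = Z2 | O2 | Z3 | O3 | T3 | Lhd | Rhd'

type_synonym srs = "(sym list \<times> sym list) set"

definition rstep :: "srs \<Rightarrow> sym list \<Rightarrow> sym list \<Rightarrow> bool" where
  "rstep R x y \<longleftrightarrow> (\<exists>u v l r. (l, r) \<in> R \<and> x = u @ l @ v \<and> y = u @ r @ v)"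

definition terminating :: "srs \<Rightarrow> bool" where
  "terminating R \<longleftrightarrow> \<not> (\<exists>f. \<forall>i. rstep R (f i) (f (Suc i)))"

definition A_rules :: srs where
  "A_rules = {([Z2, Z3], [Z3, Z2]), ([Z2, O3], [Z3, O2]), ([Z2, T3], [O3, Z2]),
              ([O2, Z3], [O3, O2]), ([O2, O3], [T3, Z2]), ([O2, T3], [T3, O2])}"

definition B_rules :: srs where
  "B_rules = {([Lhd, Z3], [Lhd, O2]), ([Lhd, O3], [Lhd, Z2, Z2]), ([Lhd, T3], [Lhd, Z2, O2])}"

definition DS_rules :: srs where
  "DS_rules = {([Z2, Z2, Rhd'], [Z3, Rhd']), ([O2, Z2, Rhd'], [Rhd']), ([O2, Rhd'], [T3, Rhd'])}"

definition SS :: srs where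
  "SS = DS_rules \<union> A_rules \<union> B_rules"

definition SS1 :: srs where
  "SS1 = SS - {([Z2, Z2, Rhd'], [Z3, Rhd'])}"

definition SS2 :: srs where
  "SS2 = SS - {([O2, Z2, Rhd'], [Rhd'])}"

end

theory Submission
  imports Defs
begin


fun vstep :: "nat \<Rightarrow> sym \<Rightarrow> nat" where
  "vstep x Z2 = 2*x" | "vstep x O2 = 2*x+1" | "vstep x Z3 = 3*x" | "vstep x O3 = 3*x+1"
| "vstep x T3 = 3*x+2" | "vstep x Lhd = 1" | "vstep x Rhd' = 2*x+1"

definition V :: "sym list \<Rightarrow> nat" where "V w = foldl vstep 0 w"

definition isbin :: "sym \<Rightarrow> bool" where "isbin s \<longleftrightarrow> s = Z2 \<or> s = O2"
definition iste :: "sym \<Rightarrow> bool" where "iste s \<longleftrightarrow> s = Z3 \<or> s = O3 \<or> s = T3"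

definition nb :: "sym list \<Rightarrow> nat" where "nb w = length (filter isbin w)"
definition nt :: "sym list \<Rightarrow> nat" where "nt w = length (filter iste w)"
definition nR :: "sym list \<Rightarrow> nat" where "nR w = length (filter (\<lambda>s. s = Rhd') w)"

fun invc :: "sym list \<Rightarrow> nat" where
  "invc [] = 0" | "invc (x#xs) = (if isbin x then nt xs else 0) + invc xs"

lemma nb_app[simp]: "nb (xs@ys) = nb xs + nb ys" by (simp add: nb_def)
lemma nt_app[simp]: "nt (xs@ys) = nt xs + nt ys" by (simp add: nt_def)
lemma nR_app[simp]: "nR (xs@ys) = nR xs + nR ys" by (simp add: nR_def)

lemma inv_app: "invc (xs@ys) = invc xs + nb xs * nt ys + invc ys"
  by (induction xs) (auto simp: nb_def nt_def)

lemma SS_elem: "(l,r) \<in> SS \<longleftrightarrow> (l,r) \<in> {([Z2, Z2, Rhd'], [Z3, Rhd']), ([O2, Z2, Rhd'], [Rhd']), ([O2, Rhd'], [T3, Rhd']),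
  ([Z2, Z3], [Z3, Z2]), ([Z2, O3], [Z3, O2]), ([Z2, T3], [O3, Z2]),
              ([O2, Z3], [O3, O2]), ([O2, O3], [T3, Z2]), ([O2, T3], [T3, O2]),
  ([Lhd, Z3], [Lhd, O2]), ([Lhd, O3], [Lhd, Z2, Z2]), ([Lhd, T3], [Lhd, Z2, O2])}"
  by (auto simp: SS_def DS_rules_def A_rules_def B_rules_def)

lemma SS_props:
  assumes "(l,r) \<in> SS"
  shows "l \<noteq> []" "r \<noteq> []" "nR l = nR r" "last l = Rhd' \<longleftrightarrow> last r = Rhd'"
    "Rhd' \<notin> set (butlast l)" "Lhd \<in> set l \<longleftrightarrow> Lhd \<in> set r"
  using assms unfolding SS_elem by (auto simp: nR_def)

lemma A_props: assumes "(l,r) \<in> A_rules"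
  shows "nt l = nt r" "nb l = nb r" "invc l = 1" "invc r = 0" "foldl vstep y l = foldl vstep y r"
  using assms by (auto simp: A_rules_def nt_def nb_def isbin_def iste_def)

lemma B_props: assumes "(l,r) \<in> B_rules"
  shows "nt r < nt l" "foldl vstep y l = foldl vstep y r" "Lhd \<in> set l"
  using assms by (auto simp: B_rules_def nt_def nb_def isbin_def iste_def)

lemma D_props: assumes "(l,r) \<in> DS_rules"
  shows "nb r < nb l" "Lhd \<notin> set l" "last l = Rhd'"
  using assms by (auto simp: DS_rules_def nt_def nb_def isbin_def iste_def)

lemma SS1_sub: "SS1 \<subseteq> SS" and SS2_sub: "SS2 \<subseteq> SS" by (auto simp: SS1_def SS2_def)

definition ABstep :: "sym list \<Rightarrow> sym list \<Rightarrow> bool" where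
  "ABstep x y \<longleftrightarrow> (\<exists>u v l r. (l,r) \<in> A_rules \<union> B_rules \<and> x = u @ l @ v \<and> y = u @ r @ v)"
definition Dstep :: "srs \<Rightarrow> sym list \<Rightarrow> sym list \<Rightarrow> bool" where
  "Dstep R x y \<longleftrightarrow> (\<exists>u v l r. (l,r) \<in> R \<inter> DS_rules \<and> x = u @ l @ v \<and> y = u @ r @ v)"

lemma rstep_cases: assumes "rstep R x y" "R \<subseteq> SS" shows "ABstep x y \<or> Dstep R x y"
  using assms unfolding rstep_def ABstep_def Dstep_def SS_def by blast

lemma rstep_props: assumes "rstep SS x y"
  shows "nR y = nR x" "x \<noteq> []" "y \<noteq> []" "last y = Rhd' \<longleftrightarrow> last x = Rhd'" "Lhd \<in> set y \<longleftrightarrow> Lhd \<in> set x"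
proof -
  obtain u v l r where lr: "(l,r) \<in> SS" "x = u@l@v" "y = u@r@v" using assms unfolding rstep_def by blast
  note P = SS_props[OF lr(1)]
  show "nR y = nR x" using lr P by simp
  show "x \<noteq> []" "y \<noteq> []" using lr P by auto
  show "last y = Rhd' \<longleftrightarrow> last x = Rhd'" using lr P by (auto simp: last_append)
  show "Lhd \<in> set y \<longleftrightarrow> Lhd \<in> set x" using lr P by auto
qed

lemma rstep_mono: "rstep R x y \<Longrightarrow> R \<subseteq> SS \<Longrightarrow> rstep SS x y"
  unfolding rstep_def by blast

lemma ABstep_measure: "ABstep x y \<Longrightarrow> (y,x) \<in> measures [nt, invc]"
proof -
  assume "ABstep x y"
  then obtain u v l r where lr: "(l,r) \<in> A_rules \<union> B_rules" "x = u@l@v" "y = u@r@v" unfolding ABstep_def by blast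
  show ?thesis
  proof (cases "(l,r) \<in> A_rules")
    case True
    note P = A_props[OF True]
    show ?thesis using lr P by (simp add: inv_app)
  next
    case False
    then have "(l,r) \<in> B_rules" using lr by blast
    note P = B_props[OF this]
    show ?thesis using lr P by simp
  qed
qed

lemma noLhd_measure: assumes "rstep SS x y" "Lhd \<notin> set x" shows "(y,x) \<in> measures [nb, invc]"
proof -
  obtain u v l r where lr: "(l,r) \<in> SS" "x = u@l@v" "y = u@r@v" using assms unfolding rstep_def by blast
  have "(l,r) \<in> A_rules \<or> (l,r) \<in> B_rules \<or> (l,r) \<in> DS_rules" using lr(1) unfolding SS_def by blast
  moreover have "(l,r) \<notin> B_rules" using B_props(3) assms(2) lr by auto
  ultimately consider "(l,r) \<in> A_rules" | "(l,r) \<in> DS_rules" by blast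
  then show ?thesis
  proof cases
    case 1 note P = A_props[OF 1] show ?thesis using lr P by (simp add: inv_app)
  next
    case 2 note P = D_props[OF 2] show ?thesis using lr P by simp
  qed
qed

lemma no_chain_measure: assumes "\<forall>i. (f (Suc i), f i) \<in> measures ms" shows False
  using assms wf_measures[of ms] unfolding wf_iff_no_infinite_down_chain by blast

definition good :: "sym list \<Rightarrow> bool" where "good w \<longleftrightarrow> Rhd' \<notin> set (butlast w)"

lemma nR_butlast: "w \<noteq> [] \<Longrightarrow> nR w = nR (butlast w) + (if last w = Rhd' then 1 else 0)"
  by (subst append_butlast_last_id[symmetric], assumption) (simp only: nR_app, simp add: nR_def)

lemma nR_zero: "nR w = 0 \<longleftrightarrow> Rhd' \<notin> set w" by (auto simp: nR_def filter_empty_conv)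

lemma good_iff: "w \<noteq> [] \<Longrightarrow> good w \<longleftrightarrow> nR w = (if last w = Rhd' then 1 else 0)"
  using nR_butlast[of w] nR_zero[of "butlast w"] by (auto simp: good_def)

lemma good_pres: assumes "rstep SS x y" "good x" shows "good y"
  using rstep_props[OF assms(1)] assms(2) good_iff[of x] good_iff[of y] by auto

lemma split_step:
  assumes R: "R \<subseteq> SS" and st: "rstep R (x@y) z" and x: "x \<noteq> []" "last x = Rhd'"
  shows "\<exists>x' y'. z = x'@y' \<and> x' \<noteq> [] \<and> last x' = Rhd' \<and>
           ((rstep R x x' \<and> y' = y) \<or> (x' = x \<and> rstep R y y'))"
proof -
  obtain u v l r where lr: "(l,r) \<in> R" "x@y = u@l@v" "z = u@r@v" using st unfolding rstep_def by blast
  have lrS: "(l,r) \<in> SS" using lr R by blast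
  note P = SS_props[OF lrS]
  from lr(2) consider (a) us where "x = u@us" "us@y = l@v" | (b) us where "x@us = u" "y = us@l@v"
    unfolding append_eq_append_conv2 by blast
  then show ?thesis
  proof cases
    case b
    have "rstep R y (us@r@v)" using lr b unfolding rstep_def by blast
    then show ?thesis using b lr x by (intro exI[of _ x] exI[of _ "us@r@v"]) auto
  next
    case a
    from a(2) consider (a1) w where "us = l@w" "w@y = v" | (a2) w where "us@w = l" "y = w@v"
      unfolding append_eq_append_conv2 by blast
    then show ?thesis
    proof cases
      case a1
      have "rstep R x (u@r@w)" using lr a a1 unfolding rstep_def by blast
      moreover have "last (u@r@w) = Rhd'" using a a1 x P by (auto simp: last_append split: if_splits)
      ultimately show ?thesis using a a1 lr P by (intro exI[of _ "u@r@w"] exI[of _ y]) auto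
    next
      case a2
      show ?thesis
      proof (cases "w = []")
        case True
        have "rstep R x (u@r)" using lr a a2 True unfolding rstep_def by (metis append_Nil2)
        moreover have "last (u@r) = Rhd'" using a a2 x P True by (auto simp: last_append)
        ultimately show ?thesis using a a2 lr P True by (intro exI[of _ "u@r"] exI[of _ y]) auto
      next
        case False
        show ?thesis
        proof (cases "us = []")
          case True
          have "rstep R y (r@v)" using lr a2 True unfolding rstep_def by (metis append_Nil)
          then show ?thesis using a a2 lr x True by (intro exI[of _ x] exI[of _ "r@v"]) auto
        next
          case usne: False
          have "last x = last us" using a usne by simp
          moreover have "butlast l = us @ butlast w" using a2(1) False by (auto simp: butlast_append)
          hence "last us \<in> set (butlast l)" using usne by simp
          ultimately show ?thesis using P(5) x by simp
        qed
      qed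
    qed
  qed
qed

lemma stutter_E:
  assumes st: "\<forall>i. s (Suc i) = s i \<or> Rel (s i) (s (Suc i))"
  shows "i \<le> j \<Longrightarrow> Rel (s j) (s (Suc j)) \<Longrightarrow> \<exists>j'\<ge>i. Rel (s j') (s (Suc j')) \<and> s j' = s i"
proof (induction "j - i" arbitrary: i)
  case 0 then show ?case by (intro exI[of _ i]) auto
next
  case (Suc d)
  show ?case
  proof (cases "Rel (s i) (s (Suc i))")
    case True then show ?thesis by (intro exI[of _ i]) auto
  next
    case False
    then have e: "s (Suc i) = s i" using st by blast
    have "\<exists>j'\<ge>Suc i. Rel (s j') (s (Suc j')) \<and> s j' = s (Suc i)"
      using Suc.hyps(1)[of "Suc i"] Suc.hyps(2) Suc.prems by auto
    then show ?thesis using e by (metis Suc_leD)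
  qed
qed

lemma stutter:
  assumes st: "\<forall>i. s (Suc i) = s i \<or> Rel (s i) (s (Suc i))"
    and inf: "\<forall>i. \<exists>j\<ge>i. Rel (s j) (s (Suc j))"
  shows "\<exists>t. (\<forall>k. \<exists>i. t k = s i) \<and> (\<forall>k. Rel (t k) (t (Suc k)))"
proof -
  have "\<forall>i. \<exists>j. j \<ge> i \<and> Rel (s j) (s (Suc j)) \<and> s j = s i"
    using stutter_E[OF st] inf by blast
  then obtain nx where nx: "\<And>i. nx i \<ge> i \<and> Rel (s (nx i)) (s (Suc (nx i))) \<and> s (nx i) = s i"
    by metis
  define idx where "idx k = ((\<lambda>j. Suc (nx j))^^k) 0" for k
  have "Rel (s (nx (idx k))) (s (nx (idx (Suc k))))" for k
  proof -
    have "idx (Suc k) = Suc (nx (idx k))" by (simp add: idx_def)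
    then show ?thesis using nx[of "idx k"] nx[of "idx (Suc k)"] by metis
  qed
  then show ?thesis by (intro exI[of _ "\<lambda>k. s (nx (idx k))"]) auto
qed

lemma chain_split:
  assumes R: "R \<subseteq> SS" and ch: "\<forall>i. rstep R (f i) (f (Suc i))"
    and f0: "f 0 = x@y" and x: "x \<noteq> []" "last x = Rhd'"
  shows "\<exists>g h. g 0 = x \<and> h 0 = y \<and> (\<forall>i. f i = g i @ h i \<and> g i \<noteq> [] \<and> last (g i) = Rhd') \<and>
     (\<forall>i. (rstep R (g i) (g (Suc i)) \<and> h (Suc i) = h i) \<or> (g (Suc i) = g i \<and> rstep R (h i) (h (Suc i))))"
proof -
  define P where "P n p \<longleftrightarrow> f n = fst p @ snd p \<and> fst p \<noteq> [] \<and> last (fst p) = Rhd' \<and> (n = 0 \<longrightarrow> p = (x,y))" for n p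
  define Q where "Q (n::nat) p p' \<longleftrightarrow> (rstep R (fst p) (fst p') \<and> snd p' = snd p) \<or> (fst p' = fst p \<and> rstep R (snd p) (snd p'))" for n p p'
  have "\<exists>F. \<forall>n. P n (F n) \<and> Q n (F n) (F (Suc n))"
  proof (rule dependent_nat_choice)
    show "\<exists>p. P 0 p" using f0 x by (auto simp: P_def)
  next
    fix p n assume "P n p"
    then have "rstep R (fst p @ snd p) (f (Suc n))" "fst p \<noteq> []" "last (fst p) = Rhd'" using ch unfolding P_def by metis+
    from split_step[OF R this] obtain x' y' where "f (Suc n) = x'@y'" "x' \<noteq> []" "last x' = Rhd'"
      "(rstep R (fst p) x' \<and> y' = snd p) \<or> (x' = fst p \<and> rstep R (snd p) y')" by blast
    then show "\<exists>p'. P (Suc n) p' \<and> Q n p p'" by (intro exI[of _ "(x',y')"]) (auto simp: P_def Q_def)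
  qed
  then obtain F where F: "\<forall>n. P n (F n) \<and> Q n (F n) (F (Suc n))" by blast
  have F1: "\<And>n. P n (F n)" and F2: "\<And>n. Q n (F n) (F (Suc n))" using F by auto
  have F0: "F 0 = (x,y)" using F1[of 0] by (simp add: P_def)
  show ?thesis
    apply (rule exI[of _ "\<lambda>i. fst (F i)"], rule exI[of _ "\<lambda>i. snd (F i)"])
    using F0 F1 F2 unfolding P_def Q_def by (simp add: F0)
qed

lemma to_good:
  assumes R: "R \<subseteq> SS"
  shows "\<forall>i. rstep R (f i) (f (Suc i)) \<Longrightarrow> \<exists>f'. (\<forall>i. rstep R (f' i) (f' (Suc i))) \<and> good (f' 0)"
proof (induction "nR (f 0)" arbitrary: f rule: less_induct)
  case less
  note ch = less.prems
  show ?case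
  proof (cases "good (f 0)")
    case True then show ?thesis using ch by blast
  next
    case False
    then have "Rhd' \<in> set (butlast (f 0))" by (simp add: good_def)
    then obtain ys zs where yz: "butlast (f 0) = ys @ Rhd' # zs" "Rhd' \<notin> set ys"
      by (metis split_list_first)
    have ne: "f 0 \<noteq> []" using yz by auto
    define x where "x = ys @ [Rhd']"
    define y where "y = zs @ [last (f 0)]"
    have f0: "f 0 = x @ y" using yz ne unfolding x_def y_def by (metis append.assoc append_Cons append_butlast_last_id append_self_conv2)
    have xne: "x \<noteq> []" "last x = Rhd'" by (auto simp: x_def)
    have nRx: "nR x = 1" using yz(2) nR_zero[of ys] by (simp add: x_def nR_def)
    have lt: "nR y < nR (f 0)" using f0 nRx by simp
    from chain_split[OF R ch f0 xne] obtain g h where gh: "g 0 = x" "h 0 = y"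
      "\<forall>i. f i = g i @ h i \<and> g i \<noteq> [] \<and> last (g i) = Rhd'"
      "\<forall>i. (rstep R (g i) (g (Suc i)) \<and> h (Suc i) = h i) \<or> (g (Suc i) = g i \<and> rstep R (h i) (h (Suc i)))"
      by blast
    have invc: "nR (g i) = nR x \<and> nR (h i) = nR y" for i
    proof (induction i)
      case 0 then show ?case using gh by simp
    next
      case (Suc i)
      then show ?case using gh(4)[rule_format, of i] rstep_props(1)[OF rstep_mono[OF _ R]] by metis
    qed
    show ?thesis
    proof (cases "\<forall>i. \<exists>j\<ge>i. rstep R (h j) (h (Suc j))")
      case True
      have "\<forall>i. h (Suc i) = h i \<or> rstep R (h i) (h (Suc i))" using gh(4) by blast
      from stutter[OF this True] obtain t where t: "\<forall>k. \<exists>i. t k = h i" "\<forall>k. rstep R (t k) (t (Suc k))" by blast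
      have "nR (t 0) < nR (f 0)" using t(1) invc lt by metis
      then show ?thesis using less.hyps t(2) by blast
    next
      case False
      then obtain N where N: "\<forall>j\<ge>N. \<not> rstep R (h j) (h (Suc j))" by blast
      have "\<forall>i. rstep R (g (N+i)) (g (Suc (N+i)))" using N gh(4) by (metis le_add1)
      moreover have "good (g N)" using good_iff[of "g N"] gh(3) invc nRx by simp
      ultimately show ?thesis by (intro exI[of _ "\<lambda>i. g (N+i)"]) simp
    qed
  qed
qed

lemma vstep_pos: "z \<ge> 1 \<Longrightarrow> vstep z c \<ge> 1" by (cases c) auto

lemma foldl_pos1: "z \<ge> 1 \<Longrightarrow> foldl vstep z u \<ge> 1"
proof (induction u arbitrary: z)
  case Nil then show ?case by simp
next
  case (Cons c u) then show ?case using Cons.IH[of "vstep z c"] vstep_pos[of z c] by simp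
qed

lemma foldl_pos: "Lhd \<in> set u \<Longrightarrow> foldl vstep z u \<ge> 1"
proof (induction u arbitrary: z)
  case Nil then show ?case by simp
next
  case (Cons c u)
  show ?case
  proof (cases "c = Lhd")
    case True then show ?thesis using foldl_pos1[of 1 u] by simp
  next
    case False then show ?thesis using Cons by simp
  qed
qed

lemma S1: "S (8*a+1) = 6*a+1"
proof -
  have m: "(8*a+1) mod 8 = 1" by simp
  have "3*(8*a+1)+1 = (6*a+1)*4" by simp
  then have "(3*(8*a+1)+1) div 4 = 6*a+1" by simp
  then show ?thesis using m unfolding S_def by simp
qed
lemma S5: "S (8*a+5) = 2*a+1"
proof -
  have m: "(8*a+5) mod 8 = 5" by simp
  have "8*a+5-1 = (2*a+1)*4" by simp
  then have "(8*a+5-1) div 4 = 2*a+1" by simp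
  then show ?thesis using m unfolding S_def by simp
qed
lemma S3: "S (4*a+3) = 6*a+5"
proof -
  have m: "(4*a+3) mod 8 \<noteq> 1" "(4*a+3) mod 8 \<noteq> 5" by presburger+
  have "3*(4*a+3)+1 = (6*a+5)*2" by simp
  then have "(3*(4*a+3)+1) div 2 = 6*a+5" by simp
  then show ?thesis using m unfolding S_def by simp
qed

lemma ABstep_V: "ABstep x y \<Longrightarrow> V y = V x"
  unfolding ABstep_def V_def using A_props(5) B_props(2) by auto

lemma Dstep_good:
  assumes D: "Dstep R x y" and g: "good x" and L: "Lhd \<in> set x"
  shows "V y = S (V x) \<and> odd (V x) \<and> V x \<noteq> 1 \<and>
     (V x mod 8 = 1 \<longrightarrow> ([Z2,Z2,Rhd'],[Z3,Rhd']) \<in> R) \<and> (V x mod 8 = 5 \<longrightarrow> ([O2,Z2,Rhd'],[Rhd']) \<in> R)"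
proof -
  obtain u v l r where lr: "(l,r) \<in> R" "(l,r) \<in> DS_rules" "x = u@l@v" "y = u@r@v"
    using D unfolding Dstep_def by blast
  note P = D_props[OF lr(2)]
  have v: "v = []"
  proof (rule ccontr)
    assume "v \<noteq> []"
    then have "butlast x = u @ l @ butlast v" using lr by (simp add: butlast_append)
    moreover have "Rhd' \<in> set l" using P(3) lr(2) by (auto simp: DS_rules_def)
    ultimately show False using g by (simp add: good_def)
  qed
  have "Lhd \<in> set u" using L P(2) lr v by auto
  then have a: "foldl vstep 0 u \<ge> 1" by (rule foldl_pos)
  define a where "a = foldl vstep 0 u"
  have Vx: "V x = foldl vstep a l" and Vy: "V y = foldl vstep a r" using lr v by (simp_all add: V_def a_def)
  from lr(2) consider "l = [Z2,Z2,Rhd']" "r = [Z3,Rhd']" | "l = [O2,Z2,Rhd']" "r = [Rhd']" | "l = [O2,Rhd']" "r = [T3,Rhd']"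
    by (auto simp: DS_rules_def)
  then show ?thesis
  proof cases
    case 1
    have "V x = 8*a+1" "V y = 6*a+1" using Vx Vy 1 by simp_all
    then show ?thesis using S1[of a] lr(1) 1 a a_def by auto
  next
    case 2
    have "V x = 8*a+5" "V y = 2*a+1" using Vx Vy 2 by simp_all
    then show ?thesis using S5[of a] lr(1) 2 a a_def by auto
  next
    case 3
    have e: "V x = 4*a+3" "V y = 6*a+5" using Vx Vy 3 by simp_all
    have "(4*a+3) mod 8 \<noteq> 1" "(4*a+3) mod 8 \<noteq> 5" "odd (4*a+3)" "4*a+3 \<noteq> 1" by presburger+
    then show ?thesis using S3[of a] e by simp
  qed
qed

lemma idx_E:
  assumes st: "\<forall>i. \<not> D i \<longrightarrow> s (Suc i) = s i"
  shows "i \<le> j \<Longrightarrow> D j \<Longrightarrow> \<exists>j'\<ge>i. D j' \<and> s j' = s i"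
proof (induction "j - i" arbitrary: i)
  case 0 then show ?case by (intro exI[of _ i]) auto
next
  case (Suc d)
  show ?case
  proof (cases "D i")
    case True then show ?thesis by (intro exI[of _ i]) auto
  next
    case False
    then have e: "s (Suc i) = s i" using st by blast
    have "\<exists>j'\<ge>Suc i. D j' \<and> s j' = s (Suc i)"
      using Suc.hyps(1)[of "Suc i"] Suc.hyps(2) Suc.prems by auto
    then show ?thesis using e by (metis Suc_leD)
  qed
qed

lemma main_back:
  assumes R: "R \<subseteq> SS" and ch: "\<forall>i. rstep R (f i) (f (Suc i))" and g0: "good (f 0)" and L0: "Lhd \<in> set (f 0)"
    and Dok: "\<And>x y. Dstep R x y \<Longrightarrow> good x \<Longrightarrow> Lhd \<in> set x \<Longrightarrow> V x mod 8 \<noteq> r"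
  shows "\<exists>n. odd n \<and> nonconvergent n \<and> \<not> (\<exists>m. traj_contains n m \<and> m mod 8 = r)"
proof -
  have chS: "rstep SS (f i) (f (Suc i))" for i using ch R by (meson rstep_mono)
  have gL: "good (f i) \<and> Lhd \<in> set (f i)" for i
  proof (induction i)
    case 0 then show ?case using g0 L0 by simp
  next
    case (Suc i) then show ?case using good_pres[OF chS] rstep_props(5)[OF chS] by blast
  qed
  define D where "D i \<longleftrightarrow> Dstep R (f i) (f (Suc i))" for i
  have AB: "\<not> D i \<Longrightarrow> ABstep (f i) (f (Suc i))" for i using rstep_cases[OF _ R] ch D_def by blast
  have infD: "\<forall>i. \<exists>j\<ge>i. D j"
  proof (rule ccontr)
    assume "\<not> (\<forall>i. \<exists>j\<ge>i. D j)"
    then obtain N where N: "\<forall>j\<ge>N. \<not> D j" by blast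
    have "(f (N + Suc i), f (N+i)) \<in> measures [nt, invc]" for i
      using N AB ABstep_measure by (metis add_Suc_right le_add1)
    then show False using no_chain_measure[of "\<lambda>i. f (N+i)" "[nt, invc]"] by blast
  qed
  define n where "n i = V (f i)" for i
  have stut: "\<forall>i. \<not> D i \<longrightarrow> n (Suc i) = n i" using AB ABstep_V n_def by simp
  have E: "\<exists>j\<ge>i. D j \<and> n j = n i" for i using idx_E[OF stut] infD by blast
  have Dfacts: "D i \<Longrightarrow> n (Suc i) = S (n i) \<and> odd (n i) \<and> n i \<noteq> 1 \<and> n i mod 8 \<noteq> r" for i
    using Dstep_good[of R "f i" "f (Suc i)"] Dok[of "f i" "f (Suc i)"] gL[of i] unfolding D_def n_def by blast
  have C: "\<exists>i. D i \<and> n i = (S^^k) (n 0)" for k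
  proof (induction k)
    case 0 then show ?case using E[of 0] by auto
  next
    case (Suc k)
    then obtain i where i: "D i" "n i = (S^^k) (n 0)" by blast
    obtain j where "D j" "n j = n (Suc i)" using E[of "Suc i"] by blast
    then show ?case using Dfacts[OF i(1)] i by auto
  qed
  show ?thesis
  proof (intro exI[of _ "n 0"] conjI)
    show "odd (n 0)" using C[of 0] Dfacts by (metis funpow_0)
    show "nonconvergent (n 0)" unfolding nonconvergent_def traj_contains_def using C Dfacts by metis
    show "\<not> (\<exists>m. traj_contains (n 0) m \<and> m mod 8 = r)" unfolding traj_contains_def using C Dfacts by metis
  qed
qed

lemma back_dir:
  assumes R: "R \<subseteq> SS"
    and Dok: "\<And>x y. Dstep R x y \<Longrightarrow> good x \<Longrightarrow> Lhd \<in> set x \<Longrightarrow> V x mod 8 \<noteq> r"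
    and H: "\<forall>n. odd n \<and> nonconvergent n \<longrightarrow> (\<exists>m. traj_contains n m \<and> m mod 8 = r)"
  shows "terminating R"
proof (rule ccontr)
  assume "\<not> terminating R"
  then obtain f where "\<forall>i. rstep R (f i) (f (Suc i))" unfolding terminating_def by blast
  from to_good[OF R this] obtain f' where f': "\<forall>i. rstep R (f' i) (f' (Suc i))" "good (f' 0)" by blast
  have chS: "rstep SS (f' i) (f' (Suc i))" for i using f' R by (meson rstep_mono)
  show False
  proof (cases "Lhd \<in> set (f' 0)")
    case True
    have "\<exists>n. odd n \<and> nonconvergent n \<and> \<not> (\<exists>m. traj_contains n m \<and> m mod 8 = r)"
      by (rule main_back[OF R f'(1) f'(2) True]) (rule Dok)
    then show False using H by blast
  next
    case False
    have nL: "Lhd \<notin> set (f' i)" for i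
    proof (induction i)
      case 0 then show ?case using False by simp
    next
      case (Suc i) then show ?case using rstep_props(5)[OF chS] by blast
    qed
    have "(f' (Suc i), f' i) \<in> measures [nb, invc]" for i using noLhd_measure[OF chS nL] .
    then show False using no_chain_measure[of f' "[nb, invc]"] by blast
  qed
qed

definition binary :: "sym list \<Rightarrow> bool" where "binary cs \<longleftrightarrow> set cs \<subseteq> {Z2, O2}"

lemma rstepI: "(l,r) \<in> R \<Longrightarrow> rstep R (u@l@v) (u@r@v)" unfolding rstep_def by blast

lemma push:
  assumes AB: "A_rules \<union> B_rules \<subseteq> R"
  shows "binary cs \<Longrightarrow> iste t \<Longrightarrow> \<exists>cs'. binary cs' \<and> (rstep R)\<^sup>*\<^sup>* (Lhd#cs@t#rest) (Lhd#cs'@rest) \<and>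
     foldl vstep 1 cs' = vstep (foldl vstep 1 cs) t"
proof (induction cs arbitrary: t rest rule: rev_induct)
  case Nil
  from Nil.prems(2) consider "t = Z3" | "t = O3" | "t = T3" by (auto simp: iste_def)
  then show ?case
  proof cases
    case 1
    have "rstep R ([]@[Lhd,Z3]@rest) ([]@[Lhd,O2]@rest)" by (rule rstepI) (use AB in \<open>auto simp: B_rules_def\<close>)
    then show ?thesis using 1 by (intro exI[of _ "[O2]"]) (auto simp: binary_def)
  next
    case 2
    have "rstep R ([]@[Lhd,O3]@rest) ([]@[Lhd,Z2,Z2]@rest)" by (rule rstepI) (use AB in \<open>auto simp: B_rules_def\<close>)
    then show ?thesis using 2 by (intro exI[of _ "[Z2,Z2]"]) (auto simp: binary_def)
  next
    case 3
    have "rstep R ([]@[Lhd,T3]@rest) ([]@[Lhd,Z2,O2]@rest)" by (rule rstepI) (use AB in \<open>auto simp: B_rules_def\<close>)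
    then show ?thesis using 3 by (intro exI[of _ "[Z2,O2]"]) (auto simp: binary_def)
  qed
next
  case (snoc b ds)
  have b: "b = Z2 \<or> b = O2" and bds: "binary ds" using snoc.prems by (auto simp: binary_def)
  have "\<exists>t' b'. ([b,t],[t',b']) \<in> A_rules \<and> iste t' \<and> (b' = Z2 \<or> b' = O2)"
    using b snoc.prems(2) by (auto simp: A_rules_def iste_def)
  then obtain t' b' where tb: "([b,t],[t',b']) \<in> A_rules" "iste t'" "b' = Z2 \<or> b' = O2" by blast
  have st: "rstep R ((Lhd#ds)@[b,t]@rest) ((Lhd#ds)@[t',b']@rest)" by (rule rstepI) (use AB tb in blast)
  from snoc.IH[OF bds tb(2), of "b'#rest"] obtain ds' where ds': "binary ds'"
    "(rstep R)\<^sup>*\<^sup>* (Lhd#ds@t'#b'#rest) (Lhd#ds'@b'#rest)" "foldl vstep 1 ds' = vstep (foldl vstep 1 ds) t'" by blast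
  have val: "foldl vstep y [b,t] = foldl vstep y [t',b']" for y using A_props(5)[OF tb(1)] .
  show ?case
  proof (intro exI[of _ "ds'@[b']"] conjI)
    show "binary (ds'@[b'])" using ds'(1) tb(3) by (auto simp: binary_def)
    show "(rstep R)\<^sup>*\<^sup>* (Lhd # (ds @ [b]) @ t # rest) (Lhd # (ds' @ [b']) @ rest)"
      using st ds'(2) by simp
    show "foldl vstep 1 (ds' @ [b']) = vstep (foldl vstep 1 (ds @ [b])) t"
      using ds'(3) val[of "foldl vstep 1 ds"] by simp
  qed
qed

lemma exists_bin: "x \<ge> 1 \<Longrightarrow> \<exists>bs. binary bs \<and> foldl vstep 1 bs = x"
proof (induction x rule: less_induct)
  case (less x)
  show ?case
  proof (cases "x = 1")
    case True then show ?thesis by (intro exI[of _ "[]"]) (auto simp: binary_def)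
  next
    case False
    then have "x div 2 \<ge> 1" "x div 2 < x" using less.prems by auto
    from less.IH[OF this(2) this(1)] obtain bs where bs: "binary bs" "foldl vstep 1 bs = x div 2" by blast
    show ?thesis
    proof (cases "even x")
      case True
      then show ?thesis using bs by (intro exI[of _ "bs@[Z2]"]) (auto simp: binary_def)
    next
      case False
      then show ?thesis using bs by (intro exI[of _ "bs@[O2]"]) (auto simp: binary_def)
    qed
  qed
qed


lemma fwd_step:
  assumes AB: "A_rules \<union> B_rules \<subseteq> R" and D3: "([O2,Rhd'],[T3,Rhd']) \<in> R"
    and bs: "binary bs" and m: "m = 2 * foldl vstep 1 bs + 1" and m135: "m \<noteq> 1" "m \<noteq> 3" "m \<noteq> 5"
    and D1: "m mod 8 = 1 \<Longrightarrow> ([Z2,Z2,Rhd'],[Z3,Rhd']) \<in> R"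
    and D2: "m mod 8 = 5 \<Longrightarrow> ([O2,Z2,Rhd'],[Rhd']) \<in> R"
  shows "\<exists>bs'. binary bs' \<and> (rstep R)\<^sup>+\<^sup>+ (Lhd#bs@[Rhd']) (Lhd#bs'@[Rhd']) \<and> 2 * foldl vstep 1 bs' + 1 = S m"
proof (cases bs rule: rev_exhaust)
  case Nil then show ?thesis using m m135 by simp
next
  case (snoc cs d)
  have cs: "binary cs" and d: "d = Z2 \<or> d = O2" using bs snoc by (auto simp: binary_def)
  define c where "c = foldl vstep 1 cs"
  show ?thesis
  proof (cases "d = O2")
    case True
    have me: "m = 4*c+3" using m snoc True c_def by simp
    have st: "rstep R ((Lhd#cs)@[O2,Rhd']@[]) ((Lhd#cs)@[T3,Rhd']@[])" by (rule rstepI[OF D3])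
    from push[OF AB cs, of T3 "[Rhd']"] obtain cs' where cs': "binary cs'"
      "(rstep R)\<^sup>*\<^sup>* (Lhd#cs@[T3,Rhd']) (Lhd#cs'@[Rhd'])" "foldl vstep 1 cs' = 3*c+2"
      by (auto simp: iste_def c_def)
    show ?thesis
    proof (intro exI[of _ cs'] conjI)
      show "binary cs'" by fact
      show "(rstep R)\<^sup>+\<^sup>+ (Lhd # bs @ [Rhd']) (Lhd # cs' @ [Rhd'])"
        using rtranclp_into_tranclp2[of "rstep R", OF _ cs'(2)] st snoc True by simp
      show "2 * foldl vstep 1 cs' + 1 = S m" using cs'(3) me S3[of c] by simp
    qed
  next
    case False
    then have dZ: "d = Z2" using d by simp
    show ?thesis
    proof (cases cs rule: rev_exhaust)
      case Nil then show ?thesis using m m135 snoc dZ by simp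
    next
      case (snoc ds e)
      note snoc1 = snoc
      have ds: "binary ds" and e: "e = Z2 \<or> e = O2" using cs snoc by (auto simp: binary_def)
      define q where "q = foldl vstep 1 ds"
      show ?thesis
      proof (cases "e = O2")
        case True
        have me: "m = 8*q+5" using m \<open>bs = cs @ [d]\<close> snoc1 True dZ q_def by simp
        have st: "rstep R ((Lhd#ds)@[O2,Z2,Rhd']@[]) ((Lhd#ds)@[Rhd']@[])" by (rule rstepI[OF D2]) (simp add: me)
        show ?thesis
        proof (intro exI[of _ ds] conjI)
          show "binary ds" by fact
          show "(rstep R)\<^sup>+\<^sup>+ (Lhd # bs @ [Rhd']) (Lhd # ds @ [Rhd'])"
            using st \<open>bs = cs @ [d]\<close> snoc1 True dZ by auto
          show "2 * foldl vstep 1 ds + 1 = S m" using me S5[of q] q_def by simp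
        qed
      next
        case False
        then have eZ: "e = Z2" using e by simp
        have me: "m = 8*q+1" using m \<open>bs = cs @ [d]\<close> snoc1 eZ dZ q_def by simp
        have st: "rstep R ((Lhd#ds)@[Z2,Z2,Rhd']@[]) ((Lhd#ds)@[Z3,Rhd']@[])" by (rule rstepI[OF D1]) (simp add: me)
        from push[OF AB ds, of Z3 "[Rhd']"] obtain cs' where cs': "binary cs'"
          "(rstep R)\<^sup>*\<^sup>* (Lhd#ds@[Z3,Rhd']) (Lhd#cs'@[Rhd'])" "foldl vstep 1 cs' = 3*q"
          by (auto simp: iste_def q_def)
        show ?thesis
        proof (intro exI[of _ cs'] conjI)
          show "binary cs'" by fact
          show "(rstep R)\<^sup>+\<^sup>+ (Lhd # bs @ [Rhd']) (Lhd # cs' @ [Rhd'])"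
            using rtranclp_into_tranclp2[of "rstep R", OF _ cs'(2)] st \<open>bs = cs @ [d]\<close> snoc1 eZ dZ by simp
          show "2 * foldl vstep 1 cs' + 1 = S m" using cs'(3) me S1[of q] by simp
        qed
      qed
    qed
  qed
qed

lemma term_wf: "terminating R \<Longrightarrow> wf {(y,x). rstep R x y}"
  unfolding terminating_def wf_iff_no_infinite_down_chain by auto

lemma tranclp_conv: "(rstep R)\<^sup>+\<^sup>+ a b \<Longrightarrow> (b,a) \<in> {(y,x). rstep R x y}\<^sup>+"
proof (induction rule: tranclp.induct)
  case (r_into_trancl a b) then show ?case by auto
next
  case (trancl_into_trancl a b c)
  then show ?case by (meson case_prodI mem_Collect_eq trancl_into_trancl2)
qed

lemma S_odd: assumes "odd n" shows "odd (S n)"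
proof -
  obtain q where q: "n = 2*q+1" using assms oddE by blast
  have "q mod 4 = 0 \<or> q mod 4 = 2 \<or> q mod 2 = 1" by presburger
  then show ?thesis
  proof (elim disjE)
    assume "q mod 4 = 0" then obtain a where "q = 4*a" by auto
    then have "n = 8*a+1" using q by simp
    then show ?thesis using S1[of a] by simp
  next
    assume "q mod 4 = 2" then obtain a where "q = 4*a+2" by (metis mod_div_mult_eq add.commute mult.commute)
    then have "n = 8*a+5" using q by simp
    then show ?thesis using S5[of a] by simp
  next
    assume "q mod 2 = 1" then obtain a where "q = 2*a+1" by (metis oddE odd_iff_mod_2_eq_one)
    then have n: "n = 4*a+3" using q by simp
    have m: "(4*a+3) mod 8 \<noteq> 1" "(4*a+3) mod 8 \<noteq> 5" by presburger+
    have "3*(4*a+3)+1 = (6*a+5)*2" by simp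
    then have "(3*(4*a+3)+1) div 2 = 6*a+5" by simp
    then show ?thesis using m n unfolding S_def by simp
  qed
qed

lemma S_3: "S 3 = 5" unfolding S_def by simp
lemma S_5: "S 5 = 1" unfolding S_def by simp

lemma fwd_dir:
  assumes AB: "A_rules \<union> B_rules \<subseteq> R" and D3: "([O2,Rhd'],[T3,Rhd']) \<in> R"
    and Dr: "\<And>m. m mod 8 \<noteq> r \<Longrightarrow> (m mod 8 = 1 \<longrightarrow> ([Z2,Z2,Rhd'],[Z3,Rhd']) \<in> R) \<and> (m mod 8 = 5 \<longrightarrow> ([O2,Z2,Rhd'],[Rhd']) \<in> R)"
    and T: "terminating R"
  shows "\<forall>n. odd n \<and> nonconvergent n \<longrightarrow> (\<exists>m. traj_contains n m \<and> m mod 8 = r)"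
proof (intro allI impI, rule ccontr)
  fix n0 assume n0: "odd n0 \<and> nonconvergent n0" and nr: "\<not> (\<exists>m. traj_contains n0 m \<and> m mod 8 = r)"
  have nr': "(S^^k) n0 mod 8 \<noteq> r" for k using nr unfolding traj_contains_def by blast
  have n1: "(S^^k) n0 \<noteq> 1" for k using n0 unfolding nonconvergent_def traj_contains_def by blast
  have n3: "(S^^k) n0 \<noteq> 3" for k
  proof
    assume "(S^^k) n0 = 3" then have "(S^^Suc (Suc k)) n0 = 1" using S_3 S_5 by simp
    then show False using n1 by blast
  qed
  have n5: "(S^^k) n0 \<noteq> 5" for k
  proof
    assume "(S^^k) n0 = 5" then have "(S^^Suc k) n0 = 1" using S_5 by simp
    then show False using n1 by blast
  qed
  define P where "P w \<longleftrightarrow> (\<exists>bs k. binary bs \<and> w = Lhd#bs@[Rhd'] \<and> 2 * foldl vstep 1 bs + 1 = (S^^k) n0)" for w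
  have stepP: "\<exists>w'. P w' \<and> (rstep R)\<^sup>+\<^sup>+ w w'" if Pw: "P w" for w
  proof -
    obtain bs k where bs: "binary bs" "w = Lhd#bs@[Rhd']" "2 * foldl vstep 1 bs + 1 = (S^^k) n0"
      using Pw unfolding P_def by blast
    have "\<exists>bs'. binary bs' \<and> (rstep R)\<^sup>+\<^sup>+ (Lhd#bs@[Rhd']) (Lhd#bs'@[Rhd']) \<and> 2 * foldl vstep 1 bs' + 1 = S ((S^^k) n0)"
    proof (rule fwd_step[OF AB D3 bs(1) bs(3)[symmetric] n1 n3 n5])
      have "(S^^k) n0 mod 8 \<noteq> r" by (rule nr')
      from Dr[OF this] show "(S ^^ k) n0 mod 8 = 1 \<Longrightarrow> ([Z2, Z2, Rhd'], [Z3, Rhd']) \<in> R"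
        and "(S ^^ k) n0 mod 8 = 5 \<Longrightarrow> ([O2, Z2, Rhd'], [Rhd']) \<in> R" by blast+
    qed
    then obtain bs' where "binary bs'" "(rstep R)\<^sup>+\<^sup>+ w (Lhd#bs'@[Rhd'])" "2 * foldl vstep 1 bs' + 1 = (S^^Suc k) n0"
      using bs(2) by auto
    then show ?thesis unfolding P_def by blast
  qed
  have "n0 \<noteq> 1" using n1[of 0] by simp
  moreover have on: "odd n0" using n0 by blast
  ultimately have "n0 div 2 \<ge> 1" by presburger
  from exists_bin[OF this] obtain bs where bs: "binary bs" "foldl vstep 1 bs = n0 div 2" by blast
  have "2 * foldl vstep 1 bs + 1 = (S^^0) n0" using bs(2) odd_two_times_div_two_succ[OF on] by simp
  then have P0: "P (Lhd#bs@[Rhd'])" using bs(1) unfolding P_def by blast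
  have "\<exists>F. \<forall>n. P (F n) \<and> (rstep R)\<^sup>+\<^sup>+ (F n) (F (Suc n))"
    by (rule dependent_nat_choice[where P="\<lambda>_ w. P w"]) (use P0 stepP in auto)
  then obtain F where F: "\<forall>n. (F (Suc n), F n) \<in> {(y,x). rstep R x y}\<^sup>+" using tranclp_conv by blast
  have "wf ({(y,x). rstep R x y}\<^sup>+)" using wf_trancl[OF term_wf[OF T]] .
  then show False using F unfolding wf_iff_no_infinite_down_chain by blast
qed

theorem mainTheorem12:
  shows "(terminating SS1 \<longleftrightarrow>
            (\<forall>n. odd n \<and> nonconvergent n \<longrightarrow> (\<exists>m. traj_contains n m \<and> m mod 8 = 1)))
       \<and> (terminating SS2 \<longleftrightarrow>
            (\<forall>n. odd n \<and> nonconvergent n \<longrightarrow> (\<exists>m. traj_contains n m \<and> m mod 8 = 5)))"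
proof (intro conjI iffI)
  have AB1: "A_rules \<union> B_rules \<subseteq> SS1" and D31: "([O2,Rhd'],[T3,Rhd']) \<in> SS1"
    and D21: "([O2,Z2,Rhd'],[Rhd']) \<in> SS1" and nD11: "([Z2,Z2,Rhd'],[Z3,Rhd']) \<notin> SS1"
    by (auto simp: SS1_def SS_def A_rules_def B_rules_def DS_rules_def)
  have AB2: "A_rules \<union> B_rules \<subseteq> SS2" and D32: "([O2,Rhd'],[T3,Rhd']) \<in> SS2"
    and D12: "([Z2,Z2,Rhd'],[Z3,Rhd']) \<in> SS2" and nD22: "([O2,Z2,Rhd'],[Rhd']) \<notin> SS2"
    by (auto simp: SS2_def SS_def A_rules_def B_rules_def DS_rules_def)
  show "terminating SS1 \<Longrightarrow> \<forall>n. odd n \<and> nonconvergent n \<longrightarrow> (\<exists>m. traj_contains n m \<and> m mod 8 = 1)"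
    by (rule fwd_dir[OF AB1 D31]) (use D21 in auto)
  show "terminating SS2 \<Longrightarrow> \<forall>n. odd n \<and> nonconvergent n \<longrightarrow> (\<exists>m. traj_contains n m \<and> m mod 8 = 5)"
    by (rule fwd_dir[OF AB2 D32]) (use D12 in auto)
  show "\<forall>n. odd n \<and> nonconvergent n \<longrightarrow> (\<exists>m. traj_contains n m \<and> m mod 8 = 1) \<Longrightarrow> terminating SS1"
  proof (rule back_dir[OF SS1_sub])
    fix x y assume "Dstep SS1 x y" "good x" "Lhd \<in> set x"
    from Dstep_good[OF this] nD11 show "V x mod 8 \<noteq> 1" by blast
  qed
  show "\<forall>n. odd n \<and> nonconvergent n \<longrightarrow> (\<exists>m. traj_contains n m \<and> m mod 8 = 5) \<Longrightarrow> terminating SS2"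
  proof (rule back_dir[OF SS2_sub])
    fix x y assume "Dstep SS2 x y" "good x" "Lhd \<in> set x"
    from Dstep_good[OF this] nD22 show "V x mod 8 \<noteq> 5" by blast
  qed
qed

end
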